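(* Let $b_1,r_1,b_2,r_2$ be positive integers with $b_1r_2-b_2r_1=1$, and suppose $n=xr_1+yr_2$ for some integers $x,y$ with $r_2\ge x>0$ and $r_1\ge y>0$. Then $$\Delta^n(b_1+b_2,r_1+r_2)=\Delta^n(b_1,r_1)+\Delta^n(b_2,r_2)-\min\{x,y\}.$$
   Context: For positive integers $b,r$ and an integer $j\ge 1$, let $\overline{jb}$ denote the residue of $jb$ modulo $r$ in $\{0,\dots,r-1\}$, and define $$\overline{M}^j(b,r)=\frac{\overline{jb}\,(r-\overline{jb})}{2r},\qquad M^j(b,r)=\frac{jb\,(r-jb)}{2r},\qquad \Delta^j(b,r)=\overline{M}^j(b,r)-M^j(b,r).$$ *)

theory Defs
  imports Complex_Main
begin

definition Mbar :: "int \<Rightarrow> int \<Rightarrow> int \<Rightarrow> real" where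
  "Mbar j b r = (let c = (j * b) mod r in real_of_int (c * (r - c)) / (2 * real_of_int r))"

definition M :: "int \<Rightarrow> int \<Rightarrow> int \<Rightarrow> real" where
  "M j b r = real_of_int (j * b * (r - j * b)) / (2 * real_of_int r)"

definition Delta :: "int \<Rightarrow> int \<Rightarrow> int \<Rightarrow> real" where
  "Delta j b r = Mbar j b r - M j b r"

end

theory Submission
  imports Defs
begin

lemma Dgen_aux:
  fixes j b r :: int and C :: real
  assumes "r > 0"
    and "real_of_int (((j * b) mod r) * (r - (j * b) mod r)) - real_of_int (j * b * (r - j * b)) = C * real_of_int r"
  shows "Delta j b r = C / 2"
proof -
  have "Delta j b r = (real_of_int (((j * b) mod r) * (r - (j * b) mod r)) - real_of_int (j * b * (r - j * b))) / (2 * real_of_int r)"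
    unfolding Delta_def Mbar_def M_def Let_def by (simp only: diff_divide_distrib)
  also have "\<dots> = C * real_of_int r / (2 * real_of_int r)" by (simp only: assms(2))
  also have "\<dots> = C / 2" using assms(1) by simp
  finally show ?thesis .
qed

lemma Dgen:
  fixes j b r q c :: int
  assumes "r > 0" "j * b = q * r + c" "0 \<le> c" "c \<le> r"
  shows "Delta j b r = real_of_int (q * (q * r + 2 * c - r)) / 2"
proof (rule Dgen_aux[OF assms(1)])
  have m0: "(j * b) mod r = c mod r" unfolding assms(2) by simp
  have m: "(j * b) mod r = (if c < r then c else 0)"
  proof (cases "c < r")
    case True
    then show ?thesis unfolding m0 using assms(3) by (simp add: mod_pos_pos_trivial)
  next
    case False
    then have "c = r" using assms by simp
    then show ?thesis unfolding m0 by simp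
  qed
  have "((j * b) mod r) * (r - (j * b) mod r) - j * b * (r - j * b) = q * (q * r + 2 * c - r) * r"
  proof (cases "c < r")
    case True
    have "c mod r = c" using True assms(3) by (simp add: mod_pos_pos_trivial)
    then show ?thesis using True unfolding m assms(2) by (simp add: algebra_simps)
  next
    case False
    then have "c = r" using assms by simp
    then show ?thesis unfolding m assms(2) using False by (simp add: algebra_simps)
  qed
  then show "real_of_int (((j * b) mod r) * (r - (j * b) mod r)) - real_of_int (j * b * (r - j * b)) = real_of_int (q * (q * r + 2 * c - r)) * real_of_int r"
    by (metis of_int_diff of_int_mult)
qed

theorem lemma2p3:
  fixes b1 r1 b2 r2 x y n :: int
  assumes "b1 > 0" "r1 > 0" "b2 > 0" "r2 > 0"
    and "b1 * r2 - b2 * r1 = 1"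
    and "n = x * r1 + y * r2"
    and "0 < x" "x \<le> r2" "0 < y" "y \<le> r1"
  shows "Delta n (b1 + b2) (r1 + r2) = Delta n b1 r1 + Delta n b2 r2 - real_of_int (min x y)"
proof -
  define Q where "Q = x * b1 + y * b2"
  have e: "b1 * r2 = 1 + b2 * r1" using assms(5) by simp
  have "n * b1 - (Q * r1 + y) = y * (b1 * r2 - b2 * r1 - 1)"
    unfolding assms(6) Q_def by (simp add: algebra_simps)
  hence h1: "n * b1 = Q * r1 + y" using assms(5) by simp
  have "n * b2 - ((Q - 1) * r2 + (r2 - x)) = - x * (b1 * r2 - b2 * r1 - 1)"
    unfolding assms(6) Q_def by (simp add: algebra_simps)
  hence h2: "n * b2 = (Q - 1) * r2 + (r2 - x)" using assms(5) by simp
  have D1: "Delta n b1 r1 = real_of_int (Q * (Q * r1 + 2 * y - r1)) / 2"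
    using Dgen[OF assms(2) h1] assms by simp
  have D2: "Delta n b2 r2 = real_of_int ((Q - 1) * ((Q - 1) * r2 + 2 * (r2 - x) - r2)) / 2"
    using Dgen[OF assms(4) h2] assms by simp
  show ?thesis
  proof (cases "x \<le> y")
    case True
    have "n * (b1 + b2) - (Q * (r1 + r2) + (y - x)) = (y - x) * (b1 * r2 - b2 * r1 - 1)"
      unfolding assms(6) Q_def by (simp add: algebra_simps)
    hence h: "n * (b1 + b2) = Q * (r1 + r2) + (y - x)" using assms(5) by simp
    have D: "Delta n (b1 + b2) (r1 + r2) = real_of_int (Q * (Q * (r1 + r2) + 2 * (y - x) - (r1 + r2))) / 2"
      using Dgen[OF _ h] assms True by simp
    have "Q * (Q * (r1 + r2) + 2 * (y - x) - (r1 + r2)) =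
          Q * (Q * r1 + 2 * y - r1) + (Q - 1) * ((Q - 1) * r2 + 2 * (r2 - x) - r2) - 2 * x"
      by (simp add: algebra_simps)
    hence "real_of_int (Q * (Q * (r1 + r2) + 2 * (y - x) - (r1 + r2))) =
          real_of_int (Q * (Q * r1 + 2 * y - r1)) + real_of_int ((Q - 1) * ((Q - 1) * r2 + 2 * (r2 - x) - r2)) - 2 * real_of_int x"
      by (metis of_int_add of_int_diff of_int_mult of_int_numeral)
    then show ?thesis unfolding D D1 D2 using True by simp
  next
    case False
    have "n * (b1 + b2) - ((Q - 1) * (r1 + r2) + (r1 + r2 + y - x)) = (y - x) * (b1 * r2 - b2 * r1 - 1)"
      unfolding assms(6) Q_def by (simp add: algebra_simps)
    hence h: "n * (b1 + b2) = (Q - 1) * (r1 + r2) + (r1 + r2 + y - x)" using assms(5) by simp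
    have D: "Delta n (b1 + b2) (r1 + r2) = real_of_int ((Q - 1) * ((Q - 1) * (r1 + r2) + 2 * (r1 + r2 + y - x) - (r1 + r2))) / 2"
      using Dgen[OF _ h] assms False by simp
    have "(Q - 1) * ((Q - 1) * (r1 + r2) + 2 * (r1 + r2 + y - x) - (r1 + r2)) =
          Q * (Q * r1 + 2 * y - r1) + (Q - 1) * ((Q - 1) * r2 + 2 * (r2 - x) - r2) - 2 * y"
      by (simp add: algebra_simps)
    hence "real_of_int ((Q - 1) * ((Q - 1) * (r1 + r2) + 2 * (r1 + r2 + y - x) - (r1 + r2))) =
          real_of_int (Q * (Q * r1 + 2 * y - r1)) + real_of_int ((Q - 1) * ((Q - 1) * r2 + 2 * (r2 - x) - r2)) - 2 * real_of_int y"
      by (metis of_int_add of_int_diff of_int_mult of_int_numeral)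
    then show ?thesis unfolding D D1 D2 using False by simp
  qed
qed

end
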